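(* There is $\varepsilon_0>0$ such that for every $\varepsilon$ with $0<\varepsilon<\varepsilon_0$, every even $m\geq 2$ and every odd $l\geq 1$, Challenger has a winning strategy in the game $\Gamma_{\mathrm{OP}}(\mathbb M_l,\mathbb M_m,6,\varepsilon)$.
   Context: $\mathbb M_m$ denotes the algebra of complex $m\times m$ matrices with matrix multiplication, addition, scalar multiplication and adjoint $a^*$ (conjugate transpose); $1_m$ is the identity matrix. For a vector $\xi=(x_1,\dots,x_m)\in\mathbb C^m$, $\|\xi\|=\sqrt{\sum_i|x_i|^2}$, and the operator norm of $a\in\mathbb M_m$ is $\|a\|_{\mathrm{OP}}=\sup\{\|a\xi\|:\|\xi\|=1\}$. For $l,m,n\geq 1$ and $\varepsilon>0$, the game $\Gamma_{\mathrm{OP}}(\mathbb M_l,\mathbb M_m,n,\varepsilon)$ between Challenger and Duplicator lasts $n$ innings: in each inning Challenger chooses a matrix $x$ with $\|x\|_{\mathrm{OP}}\leq 1$ in one of $\mathbb M_l$, $\mathbb M_m$, and Duplicator responds with a matrix $x$ with $\|x\|_{\mathrm{OP}}\leq 1$ in the other algebra; thus in inning $j$ matrices $a_j\in\mathbb M_l$ and $b_j\in\mathbb M_m$ are determined (repetitions are allowed). After $n$ innings Duplicator wins iff for all $i,j,k\leq n$ and all complex numbers $y,z$ with $\max(|y|,|z|)\leq 1$, each of the quantities $\big|\|a_i\|_{\mathrm{OP}}-\|b_i\|_{\mathrm{OP}}\big|$, $\big|\|a_ia_j-a_k\|_{\mathrm{OP}}-\|b_ib_j-b_k\|_{\mathrm{OP}}\big|$,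 $\big|\|ya_i+za_j-a_k\|_{\mathrm{OP}}-\|yb_i+zb_j-b_k\|_{\mathrm{OP}}\big|$ and $\big|\|a_i^*-a_j\|_{\mathrm{OP}}-\|b_i^*-b_j\|_{\mathrm{OP}}\big|$ is at most $\varepsilon$; otherwise Challenger wins. A winning strategy for a player is a rule specifying that player's moves as a function of previous moves such that the player wins regardless of the opponent's play. *)

theory Defs
  imports Complex_Main "Jordan_Normal_Form.Schur_Decomposition"
begin

definition vnorm :: "complex vec \<Rightarrow> real" where
  "vnorm x = sqrt (\<Sum>i<dim_vec x. (cmod (x $ i))^2)"

definition op_norm :: "complex mat \<Rightarrow> real" where
  "op_norm a = Sup {vnorm (a *\<^sub>v x) | x. x \<in> carrier_vec (dim_col a) \<and> vnorm x = 1}"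

definition unit_ball :: "nat \<Rightarrow> complex mat set" where
  "unit_ball n = {x. x \<in> carrier_mat n n \<and> op_norm x \<le> 1}"

text \<open>Winning condition for Duplicator on a finished play, given as the list
  of pairs (a_j, b_j), a_j in M_l, b_j in M_m.\<close>
definition duplicator_wins :: "real \<Rightarrow> (complex mat \<times> complex mat) list \<Rightarrow> bool" where
  "duplicator_wins \<epsilon> p \<longleftrightarrow>
     (\<forall>i<length p. \<forall>j<length p. \<forall>k<length p. \<forall>y z :: complex.
        max (cmod y) (cmod z) \<le> 1 \<longrightarrow>
        (let ai = fst (p!i); aj = fst (p!j); ak = fst (p!k);
             bi = snd (p!i); bj = snd (p!j); bk = snd (p!k) in
         \<bar>op_norm ai - op_norm bi\<bar> \<le> \<epsilon> \<and>
         \<bar>op_norm (ai * aj - ak) - op_norm (bi * bj - bk)\<bar> \<le> \<epsilon> \<and>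
         \<bar>op_norm (y \<cdot>\<^sub>m ai + z \<cdot>\<^sub>m aj - ak) - op_norm (y \<cdot>\<^sub>m bi + z \<cdot>\<^sub>m bj - bk)\<bar> \<le> \<epsilon> \<and>
         \<bar>op_norm (mat_adjoint ai - aj) - op_norm (mat_adjoint bi - bj)\<bar> \<le> \<epsilon>))"

text \<open>A Challenger strategy maps the history of previous innings to a move:
  (True, x) means Challenger plays x in M_l, (False, x) means x in M_m.\<close>
type_synonym strategy = "(complex mat \<times> complex mat) list \<Rightarrow> bool \<times> complex mat"

definition legal_challenger_strategy :: "nat \<Rightarrow> nat \<Rightarrow> strategy \<Rightarrow> bool" where
  "legal_challenger_strategy l m \<sigma> \<longleftrightarrow>
     (\<forall>h. snd (\<sigma> h) \<in> unit_ball (if fst (\<sigma> h) then l else m))"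

definition consistent_play :: "nat \<Rightarrow> nat \<Rightarrow> nat \<Rightarrow> strategy \<Rightarrow> (complex mat \<times> complex mat) list \<Rightarrow> bool" where
  "consistent_play l m n \<sigma> p \<longleftrightarrow> length p = n \<and>
     (\<forall>j<n. let (side, x) = \<sigma> (take j p) in
        (if side then fst (p!j) = x \<and> snd (p!j) \<in> unit_ball m
                 else snd (p!j) = x \<and> fst (p!j) \<in> unit_ball l))"

definition challenger_wins_game :: "nat \<Rightarrow> nat \<Rightarrow> nat \<Rightarrow> real \<Rightarrow> bool" where
  "challenger_wins_game l m n \<epsilon> \<longleftrightarrow>
     (\<exists>\<sigma>. legal_challenger_strategy l m \<sigma> \<and>
        (\<forall>p. consistent_play l m n \<sigma> p \<longrightarrow> \<not> duplicator_wins \<epsilon> p))"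

end

theory Submission
  imports Defs "HOL-Analysis.L2_Norm"
begin

lemma vnorm_L2: "vnorm x = L2_set (\<lambda>i. cmod (x $ i)) {..<dim_vec x}"
  unfolding vnorm_def L2_set_def by simp

lemma vnorm_nonneg[simp]: "0 \<le> vnorm x"
  unfolding vnorm_def by (simp add: sum_nonneg)

lemma vnorm_add: assumes "dim_vec y = dim_vec x"
  shows "vnorm (x + y) \<le> vnorm x + vnorm y"
proof -
  have "vnorm (x + y) = L2_set (\<lambda>i. cmod ((x + y) $ i)) {..<dim_vec x}"
    using assms by (simp add: vnorm_L2)
  also have "\<dots> \<le> L2_set (\<lambda>i. cmod (x $ i) + cmod (y $ i)) {..<dim_vec x}"
    using assms by (intro L2_set_mono) (auto intro: norm_triangle_ineq)
  also have "\<dots> \<le> vnorm x + vnorm y"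
    using assms by (simp add: vnorm_L2 L2_set_triangle_ineq)
  finally show ?thesis .
qed

lemma vn_add: "x \<in> carrier_vec n \<Longrightarrow> y \<in> carrier_vec n \<Longrightarrow> vnorm (x + y) \<le> vnorm x + vnorm y"
  by (rule vnorm_add) auto

lemma vnorm_smult: "vnorm (c \<cdot>\<^sub>v x) = cmod c * vnorm x"
proof -
  have "vnorm (c \<cdot>\<^sub>v x) = L2_set (\<lambda>i. cmod c * cmod (x $ i)) {..<dim_vec x}"
    unfolding vnorm_L2 by (intro L2_set_cong) (auto simp: norm_mult)
  also have "\<dots> = cmod c * vnorm x"
    by (simp add: vnorm_L2 L2_set_right_distrib)
  finally show ?thesis .
qed

lemma vnorm_coord: "i < dim_vec x \<Longrightarrow> cmod (x $ i) \<le> vnorm x"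
  unfolding vnorm_L2 by (rule member_le_L2_set) auto

lemma vnorm_zero[simp]: "vnorm (0\<^sub>v n) = 0"
  unfolding vnorm_def by simp

lemma vnorm_pos: assumes "x \<in> carrier_vec n" "x \<noteq> 0\<^sub>v n" shows "0 < vnorm x"
proof (rule ccontr)
  assume "\<not> 0 < vnorm x"
  hence "vnorm x = 0" using vnorm_nonneg[of x] by linarith
  hence "\<forall>i\<in>{..<dim_vec x}. cmod (x $ i) = 0" unfolding vnorm_L2 by (simp add: L2_set_eq_0_iff)
  hence "x = 0\<^sub>v n" using assms(1) by (intro eq_vecI) auto
  with assms(2) show False by simp
qed

lemma vnorm_diff_tri: assumes "x \<in> carrier_vec n" "y \<in> carrier_vec n" "z \<in> carrier_vec n"
  shows "vnorm (x - z) \<le> vnorm (x - y) + vnorm (y - z)"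
proof -
  have "x - z = (x - y) + (y - z)" using assms by (intro eq_vecI) auto
  hence "vnorm (x - z) = vnorm ((x - y) + (y - z))" by simp
  also have "\<dots> \<le> vnorm (x - y) + vnorm (y - z)" using assms by (intro vnorm_add) auto
  finally show ?thesis .
qed

lemma vnorm_minus_comm: assumes "x \<in> carrier_vec n" "y \<in> carrier_vec n"
  shows "vnorm (x - y) = vnorm (y - x)"
proof -
  have "y - x = (-1::complex) \<cdot>\<^sub>v (x - y)" using assms by (intro eq_vecI) auto
  thus ?thesis by (simp add: vnorm_smult)
qed

lemma vnorm_unit: "i < n \<Longrightarrow> vnorm (unit_vec n i :: complex vec) = 1"
proof -
  assume i: "i < n"
  have "(\<Sum>j<n. (cmod (unit_vec n i $ j))\<^sup>2) = (\<Sum>j<n. if j = i then 1 else 0)"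
    using i by (intro sum.cong) auto
  also have "\<dots> = 1" using i by simp
  finally show ?thesis unfolding vnorm_def by simp
qed

definition opset :: "complex mat \<Rightarrow> real set" where
  "opset a = {vnorm (a *\<^sub>v x) | x. x \<in> carrier_vec (dim_col a) \<and> vnorm x = 1}"

lemma op_norm_opset: "op_norm a = Sup (opset a)"
  unfolding op_norm_def opset_def by simp

lemma mat_vec_bound: assumes "a \<in> carrier_mat r c" "x \<in> carrier_vec c" "vnorm x \<le> 1"
  shows "vnorm (a *\<^sub>v x) \<le> (\<Sum>i<r. \<Sum>j<c. cmod (a $$ (i,j)))"
proof -
  have "vnorm (a *\<^sub>v x) \<le> (\<Sum>i<r. \<bar>cmod ((a *\<^sub>v x) $ i)\<bar>)"
    using assms unfolding vnorm_L2 by (metis L2_set_le_sum_abs carrier_matD(1) dim_mult_mat_vec)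
  also have "\<dots> \<le> (\<Sum>i<r. \<Sum>j<c. cmod (a $$ (i,j)))"
  proof (intro sum_mono)
    fix i assume i: "i \<in> {..<r}"
    have "\<bar>cmod ((a *\<^sub>v x) $ i)\<bar> = cmod (\<Sum>j\<in>{0..<c}. a $$ (i,j) * x $ j)"
      using assms i by (simp add: scalar_prod_def)
    also have "\<dots> \<le> (\<Sum>j\<in>{0..<c}. cmod (a $$ (i,j) * x $ j))" by (rule norm_sum)
    also have "\<dots> \<le> (\<Sum>j\<in>{0..<c}. cmod (a $$ (i,j)))"
    proof (intro sum_mono)
      fix j assume j: "j \<in> {0..<c}"
      have "cmod (x $ j) \<le> 1" using vnorm_coord[of j x] assms j by auto
      thus "cmod (a $$ (i,j) * x $ j) \<le> cmod (a $$ (i,j))"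
        by (simp add: norm_mult mult_left_le)
    qed
    finally show "\<bar>cmod ((a *\<^sub>v x) $ i)\<bar> \<le> (\<Sum>j<c. cmod (a $$ (i,j)))"
      by (simp add: atLeast0LessThan)
  qed
  finally show ?thesis .
qed

lemma opset_bdd: assumes "a \<in> carrier_mat r c" shows "bdd_above (opset a)"
  unfolding opset_def bdd_above_def using mat_vec_bound[OF assms] assms by fastforce

lemma opset_ne: assumes "a \<in> carrier_mat r c" "0 < c" shows "opset a \<noteq> {}"
  unfolding opset_def using assms vnorm_unit[of 0 c] by (auto intro!: exI[of _ "unit_vec c 0"])

lemma op_norm_apply: assumes a: "a \<in> carrier_mat r c" and x: "x \<in> carrier_vec c"
  shows "vnorm (a *\<^sub>v x) \<le> op_norm a * vnorm x"
proof (cases "x = 0\<^sub>v c")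
  case True
  have "a *\<^sub>v x = 0\<^sub>v r" using a True by (intro eq_vecI) (auto simp: scalar_prod_def)
  thus ?thesis using True by simp
next
  case False
  define s where "s = vnorm x"
  have s: "0 < s" using vnorm_pos[OF x False] s_def by simp
  define x' where "x' = complex_of_real (1/s) \<cdot>\<^sub>v x"
  have x': "x' \<in> carrier_vec c" "vnorm x' = 1" using x s unfolding x'_def s_def
    by (auto simp: vnorm_smult norm_divide)
  have "a *\<^sub>v x' = complex_of_real (1/s) \<cdot>\<^sub>v (a *\<^sub>v x)"
    unfolding x'_def using a x by (rule mult_mat_vec)
  hence eq: "vnorm (a *\<^sub>v x') = vnorm (a *\<^sub>v x) / s"
    using s by (simp add: vnorm_smult norm_divide)
  have "vnorm (a *\<^sub>v x') \<in> opset a" unfolding opset_def using x' a by auto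
  hence "vnorm (a *\<^sub>v x') \<le> op_norm a"
    unfolding op_norm_opset by (intro cSup_upper opset_bdd[OF a])
  have "vnorm (a *\<^sub>v x) = s * vnorm (a *\<^sub>v x')" using eq s by simp
  also have "\<dots> \<le> s * op_norm a" using s \<open>vnorm (a *\<^sub>v x') \<le> op_norm a\<close> by simp
  finally show ?thesis unfolding s_def by (simp add: mult.commute)
qed

lemma op_norm_le: assumes a: "a \<in> carrier_mat r c" and c: "0 < c"
  and h: "\<And>x. x \<in> carrier_vec c \<Longrightarrow> vnorm (a *\<^sub>v x) \<le> K * vnorm x"
  shows "op_norm a \<le> K"
  unfolding op_norm_opset
proof (rule cSup_least[OF opset_ne[OF a c]])
  fix t assume "t \<in> opset a"
  then obtain x where "x \<in> carrier_vec c" "vnorm x = 1" "t = vnorm (a *\<^sub>v x)"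
    unfolding opset_def using a by auto
  thus "t \<le> K" using h by fastforce
qed

lemma op_norm_nonneg: assumes a: "a \<in> carrier_mat r c" and c: "0 < c"
  shows "0 \<le> op_norm a"
proof -
  obtain t where "t \<in> opset a" using opset_ne[OF a c] by auto
  moreover have "t \<ge> 0" using calculation unfolding opset_def by auto
  ultimately show ?thesis unfolding op_norm_opset
    using cSup_upper[OF _ opset_bdd[OF a]] by fastforce
qed

lemma mat_adjoint_carrier[simp]: "u \<in> carrier_mat r c \<Longrightarrow> mat_adjoint u \<in> carrier_mat c r"
  unfolding mat_adjoint_def by (auto simp: mat_of_rows_def)

lemma mat_adjoint_dims[simp]: "dim_row (mat_adjoint u) = dim_col u" "dim_col (mat_adjoint u) = dim_row u"
  unfolding mat_adjoint_def by (auto simp: mat_of_rows_def)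

lemma mat_adjoint_index[simp]: "i < dim_col u \<Longrightarrow> j < dim_row u \<Longrightarrow>
   mat_adjoint u $$ (i,j) = cnj (u $$ (j,i))"
  unfolding mat_adjoint_def by (auto simp: mat_of_rows_def)

lemma app_le: assumes "M \<in> carrier_mat l l" "y \<in> carrier_vec l" "op_norm M \<le> c"
  shows "vnorm (M *\<^sub>v y) \<le> c * vnorm y"
  using op_norm_apply[OF assms(1,2)] assms(3) by (meson order.trans mult_right_mono vnorm_nonneg)

lemma app_diff: assumes "M \<in> carrier_mat l l" "N \<in> carrier_mat l l" "y \<in> carrier_vec l"
  "op_norm (M - N) \<le> c"
  shows "vnorm (M *\<^sub>v y - N *\<^sub>v y) \<le> c * vnorm y"
proof -
  have "(M - N) *\<^sub>v y = M *\<^sub>v y - N *\<^sub>v y" by (rule minus_mult_distrib_mat_vec[OF assms(1-3)])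
  moreover have "M - N \<in> carrier_mat l l" using assms(2) by (rule minus_carrier_mat)
  ultimately show ?thesis using app_le[of "M - N" l y c] assms(3,4) by simp
qed

lemma lin_aux: fixes B X Z A :: complex and t :: real
  assumes "complex_of_real (1-t) * B + complex_of_real t * (X - A) = 1/2 * X"
  shows "Z - 1/2 * X = complex_of_real (1-t) * (B - (X - Z)) + complex_of_real t * (Z - A)"
proof -
  have "complex_of_real (1-t) * (B - (X - Z)) + complex_of_real t * (Z - A)
     = (complex_of_real (1-t) * B + complex_of_real t * (X - A)) - X + Z"
    by (simp add: algebra_simps)
  also have "\<dots> = Z - 1/2 * X" unfolding assms by simp
  finally show ?thesis by simp
qed

lemma kernel_contra:
  fixes f P u w R :: "complex mat"
  assumes car: "f \<in> carrier_mat l l" "P \<in> carrier_mat l l" "u \<in> carrier_mat l l"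
    "w \<in> carrier_mat l l" "R \<in> carrier_mat l l"
  and uB: "op_norm u \<le> 1" and PB: "op_norm P \<le> 1"
  and h1: "op_norm (f * 1\<^sub>m l - 1\<^sub>m l) \<le> \<epsilon>"
  and h2: "op_norm (1 \<cdot>\<^sub>m P + 1 \<cdot>\<^sub>m R - f) \<le> \<epsilon>"
  and h3: "op_norm (w * u - P) \<le> \<epsilon>"
  and h4: "op_norm (u * w - R) \<le> \<epsilon>"
  and h5: "op_norm (mat_adjoint u - w) \<le> \<epsilon>"
  and h6: "op_norm (P * P - P) \<le> \<epsilon>"
  and eps: "\<epsilon> < 1/28" and t: "0 \<le> t" "t \<le> 1"
  and x: "x \<in> carrier_vec l" "x \<noteq> 0\<^sub>v l"
  and eq: "complex_of_real (1-t) \<cdot>\<^sub>v (u *\<^sub>v (mat_adjoint u *\<^sub>v x))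
     + complex_of_real t \<cdot>\<^sub>v (x - mat_adjoint u *\<^sub>v (u *\<^sub>v x)) = (1/2) \<cdot>\<^sub>v x"
  shows False
proof -
  define U where "U = mat_adjoint u"
  have U: "U \<in> carrier_mat l l" unfolding U_def using car by simp
  note cars = car U x(1)
  have V1: "vnorm (f *\<^sub>v y - y) \<le> \<epsilon> * vnorm y" if y: "y \<in> carrier_vec l" for y
  proof -
    have "f * 1\<^sub>m l = f" using cars by simp
    hence "op_norm (f - 1\<^sub>m l) \<le> \<epsilon>" using h1 by simp
    from app_diff[OF car(1) one_carrier_mat y this] show ?thesis using y by simp
  qed
  have V2: "vnorm (P *\<^sub>v y + R *\<^sub>v y - f *\<^sub>v y) \<le> \<epsilon> * vnorm y" if y: "y \<in> carrier_vec l" for y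
  proof -
    have "1 \<cdot>\<^sub>m P + 1 \<cdot>\<^sub>m R = P + R" using cars by (intro eq_matI) auto
    hence "op_norm (P + R - f) \<le> \<epsilon>" using h2 by simp
    from app_diff[OF _ car(1) y this] show ?thesis
      using add_mult_distrib_mat_vec[OF car(2) car(5) y] cars by simp
  qed
  have V3: "vnorm (w *\<^sub>v (u *\<^sub>v y) - P *\<^sub>v y) \<le> \<epsilon> * vnorm y" if y: "y \<in> carrier_vec l" for y
    using app_diff[OF _ car(2) y h3] assoc_mult_mat_vec[OF car(4) car(3) y] cars by simp
  have V4: "vnorm (u *\<^sub>v (w *\<^sub>v y) - R *\<^sub>v y) \<le> \<epsilon> * vnorm y" if y: "y \<in> carrier_vec l" for y
    using app_diff[OF _ car(5) y h4] assoc_mult_mat_vec[OF car(3) car(4) y] cars by simp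
  have V5: "vnorm (U *\<^sub>v y - w *\<^sub>v y) \<le> \<epsilon> * vnorm y" if y: "y \<in> carrier_vec l" for y
    using app_diff[OF U car(4) y] h5 unfolding U_def by simp
  have V6: "vnorm (P *\<^sub>v (P *\<^sub>v y) - P *\<^sub>v y) \<le> \<epsilon> * vnorm y" if y: "y \<in> carrier_vec l" for y
    using app_diff[OF _ car(2) y h6] assoc_mult_mat_vec[OF car(2) car(2) y] cars by simp
  have Vu: "vnorm (u *\<^sub>v y) \<le> vnorm y" if y: "y \<in> carrier_vec l" for y
    using app_le[OF _ y uB] cars by simp
  have VP: "vnorm (P *\<^sub>v y) \<le> vnorm y" if y: "y \<in> carrier_vec l" for y
    using app_le[OF _ y PB] cars by simp
  define ux where "ux = u *\<^sub>v x"
  define Ux where "Ux = U *\<^sub>v x"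
  define a where "a = U *\<^sub>v ux"
  define b where "b = u *\<^sub>v Ux"
  define z where "z = P *\<^sub>v x"
  define wux where "wux = w *\<^sub>v ux"
  define wx where "wx = w *\<^sub>v x"
  define uwx where "uwx = u *\<^sub>v wx"
  define Rx where "Rx = R *\<^sub>v x"
  define fx where "fx = f *\<^sub>v x"
  define Pz where "Pz = P *\<^sub>v z"
  have vc: "ux \<in> carrier_vec l" "Ux \<in> carrier_vec l" "a \<in> carrier_vec l" "b \<in> carrier_vec l"
    "z \<in> carrier_vec l" "wux \<in> carrier_vec l" "wx \<in> carrier_vec l" "uwx \<in> carrier_vec l"
    "Rx \<in> carrier_vec l" "fx \<in> carrier_vec l" "Pz \<in> carrier_vec l"
    unfolding ux_def Ux_def a_def b_def z_def wux_def wx_def uwx_def Rx_def fx_def Pz_def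
    using cars by auto
  define nx where "nx = vnorm x"
  have nx: "0 < nx" unfolding nx_def using vnorm_pos[OF x] .
  have l0: "0 < l"
  proof (rule ccontr)
    assume "\<not> 0 < l"
    hence "l = 0" by simp
    hence "x = 0\<^sub>v l" using x(1) by (intro eq_vecI) auto
    thus False using x(2) by simp
  qed
  have e0: "0 \<le> \<epsilon>"
  proof -
    have "f * 1\<^sub>m l - 1\<^sub>m l \<in> carrier_mat l l" using cars by (intro minus_carrier_mat) simp
    from op_norm_nonneg[OF this l0] h1 show ?thesis by linarith
  qed
  have i1: "vnorm (a - wux) \<le> \<epsilon> * nx"
  proof -
    have "vnorm (a - wux) \<le> \<epsilon> * vnorm ux" using V5[OF vc(1)] unfolding a_def wux_def .
    also have "\<dots> \<le> \<epsilon> * nx" using Vu[OF x(1)] e0 unfolding ux_def nx_def by (simp add: mult_left_mono)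
    finally show ?thesis .
  qed
  have i2: "vnorm (wux - z) \<le> \<epsilon> * nx" using V3[OF x(1)] unfolding wux_def ux_def z_def nx_def .
  have i3: "vnorm (b - uwx) \<le> \<epsilon> * nx"
  proof -
    have "b - uwx = u *\<^sub>v (Ux - wx)" unfolding b_def uwx_def
      using cars vc by (simp add: mult_minus_distrib_mat_vec[of _ l l])
    hence "vnorm (b - uwx) \<le> vnorm (Ux - wx)" using Vu[of "Ux - wx"] vc by simp
    also have "\<dots> \<le> \<epsilon> * nx" using V5[OF x(1)] unfolding Ux_def wx_def nx_def .
    finally show ?thesis .
  qed
  have i4: "vnorm (uwx - Rx) \<le> \<epsilon> * nx" using V4[OF x(1)] unfolding uwx_def wx_def Rx_def nx_def .
  have i5: "vnorm (z + Rx - fx) \<le> \<epsilon> * nx" using V2[OF x(1)] unfolding z_def Rx_def fx_def nx_def .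
  have i6: "vnorm (fx - x) \<le> \<epsilon> * nx" using V1[OF x(1)] unfolding fx_def nx_def .
  have i7: "vnorm (Pz - z) \<le> \<epsilon> * nx" using V6[OF x(1)] unfolding Pz_def z_def nx_def .
  have eq': "complex_of_real (1-t) \<cdot>\<^sub>v b + complex_of_real t \<cdot>\<^sub>v (x - a) = (1/2) \<cdot>\<^sub>v x"
    using eq unfolding a_def b_def ux_def Ux_def U_def .
  have iA: "vnorm (a - z) \<le> 2 * \<epsilon> * nx"
    using vnorm_diff_tri[OF vc(3) vc(6) vc(5)] i1 i2 by linarith
  have iB: "vnorm (b - (x - z)) \<le> 4 * \<epsilon> * nx"
  proof -
    have "b - (x - z) = (b - uwx) + ((uwx - Rx) + ((z + Rx - fx) + (fx - x)))"
      using vc x by (intro eq_vecI) auto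
    moreover have "vnorm ((b - uwx) + ((uwx - Rx) + ((z + Rx - fx) + (fx - x)))) \<le> vnorm (b - uwx) + vnorm ((uwx - Rx) + ((z + Rx - fx) + (fx - x)))"
      using vc x by (intro vnorm_add) auto
    ultimately have "vnorm (b - (x - z)) \<le> vnorm (b - uwx) + vnorm ((uwx - Rx) + ((z + Rx - fx) + (fx - x)))"
      by simp
    moreover have "vnorm ((uwx - Rx) + ((z + Rx - fx) + (fx - x))) \<le> vnorm (uwx - Rx) + vnorm ((z + Rx - fx) + (fx - x))"
      using vc x by (intro vnorm_add) auto
    moreover have "vnorm ((z + Rx - fx) + (fx - x)) \<le> vnorm (z + Rx - fx) + vnorm (fx - x)"
      using vc x by (intro vnorm_add) auto
    ultimately have "vnorm (b - (x - z)) \<le> vnorm (b - uwx) + (vnorm (uwx - Rx) + (vnorm (z + Rx - fx) + vnorm (fx - x)))"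
      by linarith
    thus ?thesis using i3 i4 i5 i6 by linarith
  qed
  have comp: "complex_of_real (1-t) * b$i + complex_of_real t * (x$i - a$i) = 1/2 * x$i" if i: "i < l" for i
  proof -
    have "(complex_of_real (1-t) \<cdot>\<^sub>v b + complex_of_real t \<cdot>\<^sub>v (x - a)) $ i = ((1/2) \<cdot>\<^sub>v x) $ i"
      using eq' by simp
    thus ?thesis using i vc x by simp
  qed
  have iA': "vnorm (z - a) \<le> 2 * \<epsilon> * nx"
  proof -
    have "vnorm (z - a) = vnorm (a - z)" by (rule vnorm_minus_comm) (use vc in auto)
    thus ?thesis using iA by simp
  qed
  have iC: "vnorm (z - (1/2) \<cdot>\<^sub>v x) \<le> 4 * \<epsilon> * nx"
  proof -
    have "z - (1/2) \<cdot>\<^sub>v x = complex_of_real (1-t) \<cdot>\<^sub>v (b - (x - z)) + complex_of_real t \<cdot>\<^sub>v (z - a)"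
    proof (rule eq_vecI)
      fix i assume "i < dim_vec (complex_of_real (1-t) \<cdot>\<^sub>v (b - (x - z)) + complex_of_real t \<cdot>\<^sub>v (z - a))"
      hence i: "i < l" using vc x by simp
      have "z $ i - 1/2 * x $ i = complex_of_real (1-t) * (b $ i - (x $ i - z $ i)) + complex_of_real t * (z $ i - a $ i)"
      proof -
        have c: "complex_of_real (1-t) = 1 - complex_of_real t" by simp
        show ?thesis using lin_aux[OF comp[OF i]] .
      qed
      thus "(z - (1/2) \<cdot>\<^sub>v x) $ i = (complex_of_real (1-t) \<cdot>\<^sub>v (b - (x - z)) + complex_of_real t \<cdot>\<^sub>v (z - a)) $ i"
        using i vc x by simp
    qed (use vc x in simp)
    moreover have "vnorm (complex_of_real (1-t) \<cdot>\<^sub>v (b - (x - z)) + complex_of_real t \<cdot>\<^sub>v (z - a)) \<le> vnorm (complex_of_real (1-t) \<cdot>\<^sub>v (b - (x - z))) + vnorm (complex_of_real t \<cdot>\<^sub>v (z - a))"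
      using vc x by (intro vnorm_add) auto
    ultimately have "vnorm (z - (1/2) \<cdot>\<^sub>v x) \<le> vnorm (complex_of_real (1-t) \<cdot>\<^sub>v (b - (x - z))) + vnorm (complex_of_real t \<cdot>\<^sub>v (z - a))"
      by simp
    then have hc: "vnorm (z - (1/2) \<cdot>\<^sub>v x) \<le> (1-t) * vnorm (b - (x - z)) + t * vnorm (z - a)"
    proof -
      have c1: "cmod (1 - complex_of_real t) = 1 - t"
        by (metis abs_of_nonneg diff_ge_0_iff_ge norm_of_real of_real_1 of_real_diff t(2))
      show ?thesis using t \<open>vnorm (z - (1/2) \<cdot>\<^sub>v x) \<le> _\<close> by (simp add: vnorm_smult c1)
    qed
    have "(1-t) * vnorm (b - (x - z)) \<le> (1-t) * (4 * \<epsilon> * nx)"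
      using iB t by (intro mult_left_mono) auto
    moreover have "t * vnorm (z - a) \<le> t * (2 * \<epsilon> * nx)"
      using iA' t by (intro mult_left_mono) auto
    ultimately have "vnorm (z - (1/2) \<cdot>\<^sub>v x) \<le> (1-t) * (4 * \<epsilon> * nx) + t * (2 * \<epsilon> * nx)"
      using hc by linarith
    also have "\<dots> = (4 - 2 * t) * \<epsilon> * nx" by (simp add: algebra_simps)
    also have "\<dots> \<le> 4 * \<epsilon> * nx" using t e0 nx by (intro mult_right_mono) auto
    finally show ?thesis .
  qed
  have iD: "vnorm (Pz - (1/2) \<cdot>\<^sub>v z) \<le> 4 * \<epsilon> * nx"
  proof -
    have "Pz - (1/2) \<cdot>\<^sub>v z = P *\<^sub>v (z - (1/2) \<cdot>\<^sub>v x)"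
      unfolding Pz_def z_def using cars vc
      by (simp add: mult_minus_distrib_mat_vec[of _ l l] mult_mat_vec[of _ l l])
    hence "vnorm (Pz - (1/2) \<cdot>\<^sub>v z) \<le> vnorm (z - (1/2) \<cdot>\<^sub>v x)" using VP vc x by simp
    thus ?thesis using iC by linarith
  qed
  have "(1/4) \<cdot>\<^sub>v x = (z - Pz) + ((Pz - (1/2) \<cdot>\<^sub>v z) + (-(1/2)) \<cdot>\<^sub>v (z - (1/2) \<cdot>\<^sub>v x))"
  proof (rule eq_vecI)
    fix i assume "i < dim_vec ((z - Pz) + ((Pz - (1/2) \<cdot>\<^sub>v z) + (-(1/2)) \<cdot>\<^sub>v (z - (1/2) \<cdot>\<^sub>v x)))"
    hence i: "i < l" using vc x by simp
    have "1/4 * x $ i = (z $ i - Pz $ i) + ((Pz $ i - 1/2 * z $ i) + (-(1/2)) * (z $ i - 1/2 * x $ i))"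
      by (simp add: field_simps)
    thus "((1/4) \<cdot>\<^sub>v x) $ i = ((z - Pz) + ((Pz - (1/2) \<cdot>\<^sub>v z) + (-(1/2)) \<cdot>\<^sub>v (z - (1/2) \<cdot>\<^sub>v x))) $ i"
      using i vc x by simp
  qed (use vc x in simp)
  moreover have "vnorm ((z - Pz) + ((Pz - (1/2) \<cdot>\<^sub>v z) + (-(1/2)) \<cdot>\<^sub>v (z - (1/2) \<cdot>\<^sub>v x))) \<le> vnorm (z - Pz) + vnorm ((Pz - (1/2) \<cdot>\<^sub>v z) + (-(1/2)) \<cdot>\<^sub>v (z - (1/2) \<cdot>\<^sub>v x))"
    using vc x by (intro vnorm_add) auto
  ultimately have "vnorm ((1/4) \<cdot>\<^sub>v x) \<le> vnorm (z - Pz) + vnorm ((Pz - (1/2) \<cdot>\<^sub>v z) + (-(1/2)) \<cdot>\<^sub>v (z - (1/2) \<cdot>\<^sub>v x))"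
    by simp
  moreover have "vnorm ((Pz - (1/2) \<cdot>\<^sub>v z) + (-(1/2)) \<cdot>\<^sub>v (z - (1/2) \<cdot>\<^sub>v x)) \<le> vnorm (Pz - (1/2) \<cdot>\<^sub>v z) + vnorm ((-(1/2)) \<cdot>\<^sub>v (z - (1/2) \<cdot>\<^sub>v x))"
    using vc x by (intro vnorm_add) auto
  moreover have "vnorm ((-(1/2)) \<cdot>\<^sub>v (z - (1/2) \<cdot>\<^sub>v x)) = (1/2) * vnorm (z - (1/2) \<cdot>\<^sub>v x)"
    by (simp add: vnorm_smult norm_divide)
  moreover have "vnorm ((1/4) \<cdot>\<^sub>v x) = nx / 4" unfolding nx_def by (simp add: vnorm_smult norm_divide)
  moreover have "vnorm (z - Pz) = vnorm (Pz - z)" using vc vnorm_minus_comm by blast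
  ultimately have "nx / 4 \<le> \<epsilon> * nx + 4 * \<epsilon> * nx + (1/2) * (4 * \<epsilon> * nx)"
    using i7 iD iC by linarith
  hence "nx / 4 \<le> 7 * \<epsilon> * nx" by (simp add: algebra_simps)
  moreover have "7 * \<epsilon> * nx < (1/4) * nx" using eps nx by (intro mult_strict_right_mono) auto
  ultimately show False by linarith
qed



lemma det_cnj: assumes K: "K \<in> carrier_mat n n"
  shows "det (map_mat cnj K) = cnj (det K)"
proof -
  have Km: "map_mat cnj K \<in> carrier_mat n n" using K by simp
  have "det (map_mat cnj K) = (\<Sum>p | p permutes {0..<n}. of_int (sign p) * (\<Prod>i = 0..<n. map_mat cnj K $$ (i, p i)))"
    by (rule det_def'[OF Km])
  also have "\<dots> = (\<Sum>p | p permutes {0..<n}. cnj (of_int (sign p) * (\<Prod>i = 0..<n. K $$ (i, p i))))"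
  proof (rule sum.cong[OF refl])
    fix p assume p: "p \<in> {p. p permutes {0..<n}}"
    have "(\<Prod>i = 0..<n. map_mat cnj K $$ (i, p i)) = (\<Prod>i = 0..<n. cnj (K $$ (i, p i)))"
    proof (rule prod.cong[OF refl])
      fix i assume i: "i \<in> {0..<n}"
      have "p i \<in> {0..<n}" using p i by (simp add: permutes_in_image)
      thus "map_mat cnj K $$ (i, p i) = cnj (K $$ (i, p i))" using K i by auto
    qed
    thus "of_int (sign p) * (\<Prod>i = 0..<n. map_mat cnj K $$ (i, p i)) = cnj (of_int (sign p) * (\<Prod>i = 0..<n. K $$ (i, p i)))"
      by (simp add: cnj_prod)
  qed
  also have "\<dots> = cnj (det K)" by (simp add: det_def'[OF K] cnj_sum)
  finally show ?thesis .
qed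

lemma det_herm_real: assumes K: "K \<in> carrier_mat n n"
  and h: "\<And>i j. i < n \<Longrightarrow> j < n \<Longrightarrow> K $$ (j,i) = cnj (K $$ (i,j))"
  shows "cnj (det K) = det K"
proof -
  have "map_mat cnj K = transpose_mat K"
  proof (rule eq_matI)
    fix i j assume "i < dim_row (transpose_mat K)" "j < dim_col (transpose_mat K)"
    hence i: "i < n" and j: "j < n" using K by auto
    have "K $$ (j,i) = cnj (K $$ (i,j))" using h[OF i j] .
    thus "map_mat cnj K $$ (i, j) = transpose_mat K $$ (i, j)" using K i j by simp
  qed (use K in auto)
  hence "det (map_mat cnj K) = det K" using det_transpose[OF K] by simp
  thus ?thesis using det_cnj[OF K] by simp
qed

lemma det_AB_BA: fixes u v :: "complex mat"
  assumes u: "u \<in> carrier_mat n n" and v: "v \<in> carrier_mat n n" and c: "c \<noteq> 0"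
  shows "det (c \<cdot>\<^sub>m 1\<^sub>m n - u * v) = det (c \<cdot>\<^sub>m 1\<^sub>m n - v * u)"
proof -
  define M where "M = four_block_mat (c \<cdot>\<^sub>m 1\<^sub>m n) u v (1\<^sub>m n)"
  define L where "L = four_block_mat (c \<cdot>\<^sub>m 1\<^sub>m n) (0\<^sub>m n n) v (1\<^sub>m n)"
  define E where "E = (1/c) \<cdot>\<^sub>m (v * u)"
  define R where "R = four_block_mat (1\<^sub>m n) ((1/c) \<cdot>\<^sub>m u) (0\<^sub>m n n) (1\<^sub>m n - E)"
  have vu: "v * u \<in> carrier_mat n n" using u v by simp
  have Ec: "E \<in> carrier_mat n n" unfolding E_def using vu by simp
  have "det M = det ((c \<cdot>\<^sub>m 1\<^sub>m n) * 1\<^sub>m n - u * v)"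
    unfolding M_def by (rule det_four_block_mat) (use u v in auto)
  hence dM: "det M = det (c \<cdot>\<^sub>m 1\<^sub>m n - u * v)" by simp
  have blk1: "(c \<cdot>\<^sub>m 1\<^sub>m n) * 1\<^sub>m n + 0\<^sub>m n n * 0\<^sub>m n n = c \<cdot>\<^sub>m 1\<^sub>m n" by simp
  have blk2: "(c \<cdot>\<^sub>m 1\<^sub>m n) * ((1/c) \<cdot>\<^sub>m u) + 0\<^sub>m n n * (1\<^sub>m n - E) = u"
  proof -
    have "(c \<cdot>\<^sub>m 1\<^sub>m n) * ((1/c) \<cdot>\<^sub>m u) = c \<cdot>\<^sub>m (1\<^sub>m n * ((1/c) \<cdot>\<^sub>m u))"
      by (rule mult_smult_assoc_mat) (use u in auto)
    also have "\<dots> = u" using u c by (intro eq_matI) auto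
    finally show ?thesis using u Ec by (simp add: left_mult_zero_mat)
  qed
  have blk3: "v * 1\<^sub>m n + 1\<^sub>m n * 0\<^sub>m n n = v" using v by simp
  have blk4: "v * ((1/c) \<cdot>\<^sub>m u) + 1\<^sub>m n * (1\<^sub>m n - E) = 1\<^sub>m n"
  proof -
    have "v * ((1/c) \<cdot>\<^sub>m u) = E" unfolding E_def by (rule mult_smult_distrib[OF v u])
    moreover have "1\<^sub>m n * (1\<^sub>m n - E) = 1\<^sub>m n - E" using Ec by simp
    ultimately show ?thesis using Ec by (intro eq_matI) auto
  qed
  have "L * R = four_block_mat ((c \<cdot>\<^sub>m 1\<^sub>m n) * 1\<^sub>m n + 0\<^sub>m n n * 0\<^sub>m n n)
     ((c \<cdot>\<^sub>m 1\<^sub>m n) * ((1/c) \<cdot>\<^sub>m u) + 0\<^sub>m n n * (1\<^sub>m n - E))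
     (v * 1\<^sub>m n + 1\<^sub>m n * 0\<^sub>m n n) (v * ((1/c) \<cdot>\<^sub>m u) + 1\<^sub>m n * (1\<^sub>m n - E))"
    unfolding L_def R_def by (rule mult_four_block_mat) (use u v Ec in auto)
  hence LR: "L * R = M" unfolding blk1 blk2 blk3 blk4 M_def .
  have dL: "det L = c ^ n"
    unfolding L_def by (subst det_four_block_mat_upper_right_zero[of _ n _ n]) (use v in auto)
  have dR: "det R = det (1\<^sub>m n - E)"
    unfolding R_def by (subst det_four_block_mat_lower_left_zero[of _ n _ n]) (use u Ec in auto)
  have Lc: "L \<in> carrier_mat (n+n) (n+n)" unfolding L_def using v by auto
  have Rc: "R \<in> carrier_mat (n+n) (n+n)" unfolding R_def using u Ec by auto
  have "det M = c ^ n * det (1\<^sub>m n - E)" using det_mult[OF Lc Rc] LR dL dR by simp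
  also have "\<dots> = det (c \<cdot>\<^sub>m (1\<^sub>m n - E))" using Ec by simp
  also have "c \<cdot>\<^sub>m (1\<^sub>m n - E) = c \<cdot>\<^sub>m 1\<^sub>m n - v * u"
    unfolding E_def using vu u v c by (intro eq_matI) (auto simp: field_simps)
  finally show ?thesis using dM by simp
qed


lemma smult_mat_vec: "A \<in> carrier_mat nr nc \<Longrightarrow> v \<in> carrier_vec nc \<Longrightarrow> (k \<cdot>\<^sub>m A) *\<^sub>v v = k \<cdot>\<^sub>v (A *\<^sub>v v)"
  by (intro eq_vecI) (auto simp: scalar_prod_def sum_distrib_left ac_simps)

lemma herm_uU: assumes u: "u \<in> carrier_mat l l" and i: "i < l" and j: "j < l"
  shows "(u * mat_adjoint u) $$ (j,i) = cnj ((u * mat_adjoint u) $$ (i,j))"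
    and "(mat_adjoint u * u) $$ (j,i) = cnj ((mat_adjoint u * u) $$ (i,j))"
proof -
  have "(u * mat_adjoint u) $$ (j,i) = (\<Sum>k = 0..<l. u $$ (j,k) * cnj (u $$ (i,k)))"
    using u i j by (simp add: scalar_prod_def)
  moreover have "(u * mat_adjoint u) $$ (i,j) = (\<Sum>k = 0..<l. u $$ (i,k) * cnj (u $$ (j,k)))"
    using u i j by (simp add: scalar_prod_def)
  ultimately show "(u * mat_adjoint u) $$ (j,i) = cnj ((u * mat_adjoint u) $$ (i,j))"
    by (simp add: cnj_sum ac_simps)
  have "(mat_adjoint u * u) $$ (j,i) = (\<Sum>k = 0..<l. cnj (u $$ (k,j)) * u $$ (k,i))"
    using u i j by (simp add: scalar_prod_def)
  moreover have "(mat_adjoint u * u) $$ (i,j) = (\<Sum>k = 0..<l. cnj (u $$ (k,i)) * u $$ (k,j))"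
    using u i j by (simp add: scalar_prod_def)
  ultimately show "(mat_adjoint u * u) $$ (j,i) = cnj ((mat_adjoint u * u) $$ (i,j))"
    by (simp add: cnj_sum ac_simps)
qed

lemma main_l:
  fixes f P u w R :: "complex mat"
  assumes car: "f \<in> carrier_mat l l" "P \<in> carrier_mat l l" "u \<in> carrier_mat l l"
    "w \<in> carrier_mat l l" "R \<in> carrier_mat l l"
  and uB: "op_norm u \<le> 1" and PB: "op_norm P \<le> 1"
  and h1: "op_norm (f * 1\<^sub>m l - 1\<^sub>m l) \<le> \<epsilon>"
  and h2: "op_norm (1 \<cdot>\<^sub>m P + 1 \<cdot>\<^sub>m R - f) \<le> \<epsilon>"
  and h3: "op_norm (w * u - P) \<le> \<epsilon>"
  and h4: "op_norm (u * w - R) \<le> \<epsilon>"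
  and h5: "op_norm (mat_adjoint u - w) \<le> \<epsilon>"
  and h6: "op_norm (P * P - P) \<le> \<epsilon>"
  and eps: "\<epsilon> < 1/28" and l: "odd l"
  shows False
proof -
  define U where "U = mat_adjoint u"
  have U: "U \<in> carrier_mat l l" unfolding U_def using car by simp
  define A where "A = U * u"
  define B where "B = u * U"
  have A: "A \<in> carrier_mat l l" and B: "B \<in> carrier_mat l l" unfolding A_def B_def using U car by auto
  define K where "K t = (1/2) \<cdot>\<^sub>m 1\<^sub>m l - (complex_of_real (1-t) \<cdot>\<^sub>m B + complex_of_real t \<cdot>\<^sub>m (1\<^sub>m l - A))" for t
  have Kc: "K t \<in> carrier_mat l l" for t unfolding K_def using A B by (intro minus_carrier_mat add_carrier_mat smult_carrier_mat) auto
  define ent where "ent t i j = (if i = j then 1/2 else 0) - (complex_of_real (1-t) * B $$ (i,j)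
      + complex_of_real t * ((if i = j then 1 else 0) - A $$ (i,j)))" for t i j
  have Kent: "K t $$ (i,j) = ent t i j" if "i < l" "j < l" for t i j
    unfolding K_def ent_def using that A B by simp
  have nz: "det (K t) \<noteq> 0" if t: "0 \<le> t" "t \<le> 1" for t
  proof
    assume "det (K t) = 0"
    then obtain x where x: "x \<in> carrier_vec l" "x \<noteq> 0\<^sub>v l" and Kx: "K t *\<^sub>v x = 0\<^sub>v l"
      using det_0_iff_vec_prod_zero_field[OF Kc] by blast
    have "K t *\<^sub>v x = (1/2) \<cdot>\<^sub>v x - (complex_of_real (1-t) \<cdot>\<^sub>v (u *\<^sub>v (U *\<^sub>v x))
        + complex_of_real t \<cdot>\<^sub>v (x - U *\<^sub>v (u *\<^sub>v x)))"
    proof -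
      have e1: "((1/2) \<cdot>\<^sub>m 1\<^sub>m l) *\<^sub>v x = (1/2) \<cdot>\<^sub>v x" using x by (simp add: smult_mat_vec[of _ l l])
      have e2: "(complex_of_real (1-t) \<cdot>\<^sub>m B) *\<^sub>v x = complex_of_real (1-t) \<cdot>\<^sub>v (u *\<^sub>v (U *\<^sub>v x))"
        using x car U unfolding B_def by (simp add: smult_mat_vec[of _ l l])
      have e3: "(complex_of_real t \<cdot>\<^sub>m (1\<^sub>m l - A)) *\<^sub>v x = complex_of_real t \<cdot>\<^sub>v (x - U *\<^sub>v (u *\<^sub>v x))"
      proof -
        have "(1\<^sub>m l - A) *\<^sub>v x = 1\<^sub>m l *\<^sub>v x - A *\<^sub>v x" by (rule minus_mult_distrib_mat_vec[OF one_carrier_mat A x(1)])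
        also have "\<dots> = x - U *\<^sub>v (u *\<^sub>v x)" using x car U unfolding A_def by simp
        finally have ee: "(1\<^sub>m l - A) *\<^sub>v x = x - U *\<^sub>v (u *\<^sub>v x)" .
        have "(complex_of_real t \<cdot>\<^sub>m (1\<^sub>m l - A)) *\<^sub>v x = complex_of_real t \<cdot>\<^sub>v ((1\<^sub>m l - A) *\<^sub>v x)"
          by (rule smult_mat_vec[of _ l l]) (use A x in \<open>auto intro: minus_carrier_mat\<close>)
        thus ?thesis unfolding ee .
      qed
      have "K t *\<^sub>v x = ((1/2) \<cdot>\<^sub>m 1\<^sub>m l) *\<^sub>v x - (complex_of_real (1-t) \<cdot>\<^sub>m B + complex_of_real t \<cdot>\<^sub>m (1\<^sub>m l - A)) *\<^sub>v x"
        unfolding K_def by (rule minus_mult_distrib_mat_vec[of _ l l]) (use A B x in auto)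
      also have "(complex_of_real (1-t) \<cdot>\<^sub>m B + complex_of_real t \<cdot>\<^sub>m (1\<^sub>m l - A)) *\<^sub>v x
          = (complex_of_real (1-t) \<cdot>\<^sub>m B) *\<^sub>v x + (complex_of_real t \<cdot>\<^sub>m (1\<^sub>m l - A)) *\<^sub>v x"
        by (rule add_mult_distrib_mat_vec[of _ l l]) (use A B x in auto)
      finally show ?thesis unfolding e1 e2 e3 .
    qed
    hence "(1/2) \<cdot>\<^sub>v x - (complex_of_real (1-t) \<cdot>\<^sub>v (u *\<^sub>v (U *\<^sub>v x))
        + complex_of_real t \<cdot>\<^sub>v (x - U *\<^sub>v (u *\<^sub>v x))) = 0\<^sub>v l" using Kx by simp
    hence "complex_of_real (1-t) \<cdot>\<^sub>v (u *\<^sub>v (U *\<^sub>v x))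
        + complex_of_real t \<cdot>\<^sub>v (x - U *\<^sub>v (u *\<^sub>v x)) = (1/2) \<cdot>\<^sub>v x"
    proof -
      assume z: "(1/2) \<cdot>\<^sub>v x - (complex_of_real (1-t) \<cdot>\<^sub>v (u *\<^sub>v (U *\<^sub>v x))
        + complex_of_real t \<cdot>\<^sub>v (x - U *\<^sub>v (u *\<^sub>v x))) = 0\<^sub>v l"
      show ?thesis
      proof (rule eq_vecI)
        fix i assume "i < dim_vec ((1/2) \<cdot>\<^sub>v x)"
        hence i: "i < l" using x by simp
        have "((1/2) \<cdot>\<^sub>v x - (complex_of_real (1-t) \<cdot>\<^sub>v (u *\<^sub>v (U *\<^sub>v x))
          + complex_of_real t \<cdot>\<^sub>v (x - U *\<^sub>v (u *\<^sub>v x)))) $ i = 0\<^sub>v l $ i" using z by simp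
        thus "(complex_of_real (1-t) \<cdot>\<^sub>v (u *\<^sub>v (U *\<^sub>v x))
          + complex_of_real t \<cdot>\<^sub>v (x - U *\<^sub>v (u *\<^sub>v x))) $ i = ((1/2) \<cdot>\<^sub>v x) $ i"
          using i x car U by simp
      qed (use x car U in simp)
    qed
    thus False using kernel_contra[OF car uB PB h1 h2 h3 h4 h5 h6 eps t x] unfolding U_def by simp
  qed
  have real: "cnj (det (K t)) = det (K t)" for t
  proof (rule det_herm_real[OF Kc])
    fix i j assume i: "i < l" and j: "j < l"
    have "B $$ (j,i) = cnj (B $$ (i,j))" "A $$ (j,i) = cnj (A $$ (i,j))"
      unfolding A_def B_def U_def using herm_uU[OF car(3) i j] by auto
    thus "K t $$ (j,i) = cnj (K t $$ (i,j))" unfolding Kent[OF i j] Kent[OF j i] ent_def by auto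
  qed
  have K0: "K 0 = (1/2) \<cdot>\<^sub>m 1\<^sub>m l - u * U"
    unfolding K_def B_def using A car U by (intro eq_matI) auto
  have K1: "K 1 = (-1) \<cdot>\<^sub>m ((1/2) \<cdot>\<^sub>m 1\<^sub>m l - U * u)"
    unfolding K_def A_def using B car U by (intro eq_matI) auto
  have d1: "det (K 1) = - det (K 0)"
  proof -
    have "det (K 1) = (-1) ^ l * det ((1/2) \<cdot>\<^sub>m 1\<^sub>m l - U * u)" unfolding K1 using car U by simp
    also have "(-1::complex) ^ l = -1" using l by simp
    also have "det ((1/2) \<cdot>\<^sub>m 1\<^sub>m l - U * u) = det ((1/2) \<cdot>\<^sub>m 1\<^sub>m l - u * U)"
      using det_AB_BA[OF U car(3), of "1/2"] by simp
    finally show ?thesis unfolding K0 by simp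
  qed
  define F where "F t = (\<Sum>p | p permutes {0..<l}. of_int (sign p) * (\<Prod>i = 0..<l. ent t i (p i)))" for t
  have dF: "det (K t) = F t" for t
  proof -
    have "det (K t) = (\<Sum>p | p permutes {0..<l}. of_int (sign p) * (\<Prod>i = 0..<l. K t $$ (i, p i)))"
      by (rule det_def'[OF Kc])
    also have "\<dots> = F t" unfolding F_def
    proof (rule sum.cong[OF refl])
      fix p assume p: "p \<in> {p. p permutes {0..<l}}"
      have "(\<Prod>i = 0..<l. K t $$ (i, p i)) = (\<Prod>i = 0..<l. ent t i (p i))"
      proof (rule prod.cong[OF refl])
        fix i assume i: "i \<in> {0..<l}"
        have "p i \<in> {0..<l}" using p i by (simp add: permutes_in_image)
        thus "K t $$ (i, p i) = ent t i (p i)" using Kent i by simp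
      qed
      thus "of_int (sign p) * (\<Prod>i = 0..<l. K t $$ (i, p i)) = of_int (sign p) * (\<Prod>i = 0..<l. ent t i (p i))"
        by simp
    qed
    finally show ?thesis .
  qed
  have contF: "continuous_on {0..1} F"
    unfolding F_def ent_def by (intro continuous_intros)
  define g where "g t = Re (F t)" for t
  have contg: "continuous_on {0..1} g" unfolding g_def by (intro continuous_intros contF)
  have Fg: "F t = complex_of_real (g t)" for t
    using real[of t] unfolding dF g_def by (metis Reals_cnj_iff complex_is_Real_iff of_real_Re)
  have gnz: "g t \<noteq> 0" if "0 \<le> t" "t \<le> 1" for t using nz[OF that] Fg[of t] dF[of t] by auto
  have g1: "g 1 = - g 0" using d1 unfolding dF g_def by simp
  show False
  proof (cases "g 0 > 0")
    case True
    then obtain t where "0 \<le> t" "t \<le> 1" "g t = 0" using IVT2'[of g 1 0 0] contg g1 by auto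
    thus False using gnz by blast
  next
    case False
    hence "g 0 < 0" using gnz[of 0] by auto
    then obtain t where "0 \<le> t" "t \<le> 1" "g t = 0" using IVT'[of g 0 0 1] contg g1 by auto
    thus False using gnz by blast
  qed
qed


lemma op_norm_zero: assumes "0 < n" shows "op_norm (0\<^sub>m n n :: complex mat) = 0"
proof -
  have "op_norm (0\<^sub>m n n :: complex mat) \<le> 0"
  proof (rule op_norm_le[OF zero_carrier_mat assms])
    fix x :: "complex vec" assume x: "x \<in> carrier_vec n"
    have "0\<^sub>m n n *\<^sub>v x = 0\<^sub>v n" using x by (intro eq_vecI) (auto simp: scalar_prod_def)
    thus "vnorm (0\<^sub>m n n *\<^sub>v x) \<le> 0 * vnorm x" by simp
  qed
  moreover have "0 \<le> op_norm (0\<^sub>m n n :: complex mat)" by (rule op_norm_nonneg[OF zero_carrier_mat assms])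
  ultimately show ?thesis by simp
qed

lemma sum_single: fixes k0 m :: nat assumes "k0 < m" "\<And>k. k < m \<Longrightarrow> k \<noteq> k0 \<Longrightarrow> f k = 0"
  shows "(\<Sum>k = 0..<m. f k) = f k0"
proof -
  have "(\<Sum>k = 0..<m. f k) = f k0 + (\<Sum>k \<in> {0..<m} - {k0}. f k)"
    using assms(1) by (subst sum.remove[of _ k0]) auto
  also have "(\<Sum>k \<in> {0..<m} - {k0}. f k) = 0" using assms(2) by (intro sum.neutral) auto
  finally show ?thesis by simp
qed

lemma norm_le_perm:
  fixes M :: "complex mat"
  assumes M: "M \<in> carrier_mat n n" and x: "x \<in> carrier_vec n"
  and S: "S \<subseteq> {..<n}" and pi: "inj_on \<pi> S" "\<pi> ` S \<subseteq> {..<n}"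
  and Mx: "\<And>i. i < n \<Longrightarrow> (M *\<^sub>v x) $ i = (if i \<in> S then x $ (\<pi> i) else 0)"
  shows "vnorm (M *\<^sub>v x) \<le> vnorm x"
proof -
  have "(\<Sum>i<n. (cmod ((M *\<^sub>v x) $ i))\<^sup>2) = (\<Sum>i<n. if i \<in> S then (cmod (x $ (\<pi> i)))\<^sup>2 else 0)"
    using Mx by (intro sum.cong) auto
  also have "\<dots> = (\<Sum>i\<in>S. (cmod (x $ (\<pi> i)))\<^sup>2)"
    using S by (simp add: sum.If_cases Int_absorb1)
  also have "\<dots> = (\<Sum>j\<in>\<pi> ` S. (cmod (x $ j))\<^sup>2)" using pi(1) by (simp add: sum.reindex)
  also have "\<dots> \<le> (\<Sum>j<n. (cmod (x $ j))\<^sup>2)" using pi(2) by (intro sum_mono2) auto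
  finally have "(\<Sum>i<n. (cmod ((M *\<^sub>v x) $ i))\<^sup>2) \<le> (\<Sum>j<n. (cmod (x $ j))\<^sup>2)" .
  thus ?thesis unfolding vnorm_def using M x by simp
qed

definition pm :: "nat \<Rightarrow> complex mat" where
  "pm m = mat m m (\<lambda>(i,j). if i = j \<and> i < m div 2 then 1 else 0)"
definition qm :: "nat \<Rightarrow> complex mat" where
  "qm m = mat m m (\<lambda>(i,j). if i = j \<and> m div 2 \<le> i then 1 else 0)"
definition vm :: "nat \<Rightarrow> complex mat" where
  "vm m = mat m m (\<lambda>(i,j). if m div 2 \<le> i \<and> j = i - m div 2 then 1 else 0)"

lemma pm_c[simp]: "pm m \<in> carrier_mat m m" unfolding pm_def by simp
lemma qm_c[simp]: "qm m \<in> carrier_mat m m" unfolding qm_def by simp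
lemma vm_c[simp]: "vm m \<in> carrier_mat m m" unfolding vm_def by simp

lemma cnj_if01[simp]: "cnj (if P then 1 else 0) = (if P then 1 else 0)" by simp

lemma vsm_index: "i < m \<Longrightarrow> j < m \<Longrightarrow> mat_adjoint (vm m) $$ (i,j) = (if m div 2 \<le> j \<and> i = j - m div 2 then 1 else 0)"
  unfolding vm_def by simp

lemma unit_ball_le: assumes "M \<in> carrier_mat n n" "0 < n"
  "\<And>x. x \<in> carrier_vec n \<Longrightarrow> vnorm (M *\<^sub>v x) \<le> vnorm x"
  shows "M \<in> unit_ball n"
  unfolding unit_ball_def using op_norm_le[OF assms(1,2), of 1] assms by auto

lemma one_ub: "0 < n \<Longrightarrow> 1\<^sub>m n \<in> unit_ball n"
  by (rule unit_ball_le) auto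

lemma pm_ub: assumes "0 < m" shows "pm m \<in> unit_ball m"
proof (rule unit_ball_le[OF pm_c assms])
  fix x :: "complex vec" assume x: "x \<in> carrier_vec m"
  show "vnorm (pm m *\<^sub>v x) \<le> vnorm x"
  proof (rule norm_le_perm[where S="{..<m div 2}" and \<pi>=id, OF pm_c x])
    fix i assume i: "i < m"
    have "(pm m *\<^sub>v x) $ i = (\<Sum>j = 0..<m. (if i = j \<and> i < m div 2 then 1 else 0) * x $ j)"
      using i x unfolding pm_def by (simp add: scalar_prod_def)
    also have "\<dots> = (if i = i \<and> i < m div 2 then 1 else 0) * x $ i"
      using i by (intro sum_single) auto
    finally show "(pm m *\<^sub>v x) $ i = (if i \<in> {..<m div 2} then x $ (id i) else 0)" by simp
  qed auto
qed

lemma qm_ub: assumes "0 < m" shows "qm m \<in> unit_ball m"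
proof (rule unit_ball_le[OF qm_c assms])
  fix x :: "complex vec" assume x: "x \<in> carrier_vec m"
  show "vnorm (qm m *\<^sub>v x) \<le> vnorm x"
  proof (rule norm_le_perm[where S="{m div 2..<m}" and \<pi>=id, OF qm_c x])
    fix i assume i: "i < m"
    have "(qm m *\<^sub>v x) $ i = (\<Sum>j = 0..<m. (if i = j \<and> m div 2 \<le> i then 1 else 0) * x $ j)"
      using i x unfolding qm_def by (simp add: scalar_prod_def)
    also have "\<dots> = (if i = i \<and> m div 2 \<le> i then 1 else 0) * x $ i"
      using i by (intro sum_single) auto
    finally show "(qm m *\<^sub>v x) $ i = (if i \<in> {m div 2..<m} then x $ (id i) else 0)" using i by simp
  qed auto
qed

lemma vm_ub: assumes "0 < m" shows "vm m \<in> unit_ball m"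
proof (rule unit_ball_le[OF vm_c assms])
  fix x :: "complex vec" assume x: "x \<in> carrier_vec m"
  show "vnorm (vm m *\<^sub>v x) \<le> vnorm x"
  proof (rule norm_le_perm[where S="{m div 2..<m}" and \<pi>="\<lambda>i. i - m div 2", OF vm_c x])
    fix i assume i: "i < m"
    have "(vm m *\<^sub>v x) $ i = (\<Sum>j = 0..<m. (if m div 2 \<le> i \<and> j = i - m div 2 then 1 else 0) * x $ j)"
      using i x unfolding vm_def by (simp add: scalar_prod_def)
    also have "\<dots> = (if m div 2 \<le> i \<and> i - m div 2 = i - m div 2 then 1 else 0) * x $ (i - m div 2)"
      using i by (intro sum_single) auto
    finally show "(vm m *\<^sub>v x) $ i = (if i \<in> {m div 2..<m} then x $ (i - m div 2) else 0)" using i by simp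
  qed (auto simp: inj_on_def)
qed

lemma vsm_ub: assumes m: "even m" "0 < m" shows "mat_adjoint (vm m) \<in> unit_ball m"
proof (rule unit_ball_le)
  show "mat_adjoint (vm m) \<in> carrier_mat m m" by simp
  show "0 < m" by fact
  fix x :: "complex vec" assume x: "x \<in> carrier_vec m"
  show "vnorm (mat_adjoint (vm m) *\<^sub>v x) \<le> vnorm x"
  proof (rule norm_le_perm[where S="{..<m div 2}" and \<pi>="\<lambda>i. i + m div 2", OF _ x])
    fix i assume i: "i < m"
    have "(mat_adjoint (vm m) *\<^sub>v x) $ i = (\<Sum>j = 0..<m. (if m div 2 \<le> j \<and> i = j - m div 2 then 1 else 0) * x $ j)"
      using i x by (auto simp: scalar_prod_def vm_def intro!: sum.cong)
    also have "\<dots> = (if i < m div 2 then x $ (i + m div 2) else 0)"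
    proof (cases "i < m div 2")
      case True
      have "i + m div 2 < m" using True m by auto
      hence "(\<Sum>j = 0..<m. (if m div 2 \<le> j \<and> i = j - m div 2 then 1 else 0) * x $ j)
        = (if m div 2 \<le> i + m div 2 \<and> i = i + m div 2 - m div 2 then 1 else 0) * x $ (i + m div 2)"
        by (intro sum_single) auto
      thus ?thesis using True by simp
    next
      case False
      have "(\<Sum>j = 0..<m. (if m div 2 \<le> j \<and> i = j - m div 2 then 1 else 0) * x $ j) = 0"
      proof (intro sum.neutral ballI)
        fix j assume j: "j \<in> {0..<m}"
        have "\<not> (m div 2 \<le> j \<and> i = j - m div 2)" using False j i m by auto
        thus "(if m div 2 \<le> j \<and> i = j - m div 2 then 1 else 0) * x $ j = 0" by auto
      qed
      thus ?thesis using False by simp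
    qed
    finally show "(mat_adjoint (vm m) *\<^sub>v x) $ i = (if i \<in> {..<m div 2} then x $ (i + m div 2) else 0)" by simp
  qed (use m in \<open>auto simp: inj_on_def\<close>)
qed

lemma vsv: assumes m: "even m" shows "mat_adjoint (vm m) * vm m = pm m"
proof (rule eq_matI)
  fix i j assume "i < dim_row (pm m)" "j < dim_col (pm m)"
  hence i: "i < m" and j: "j < m" by (auto simp: pm_def qm_def)
  have "(mat_adjoint (vm m) * vm m) $$ (i,j) = (\<Sum>k = 0..<m. (if m div 2 \<le> k \<and> i = k - m div 2 then 1 else 0)
      * (if m div 2 \<le> k \<and> j = k - m div 2 then 1 else 0))"
    using i j by (simp add: scalar_prod_def vsm_index vm_def)
  also have "\<dots> = (if i = j \<and> i < m div 2 then 1 else 0)"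
  proof (cases "i < m div 2")
    case True
    have "i + m div 2 < m" using True m by auto
    hence "(\<Sum>k = 0..<m. (if m div 2 \<le> k \<and> i = k - m div 2 then 1 else 0)
      * (if m div 2 \<le> k \<and> j = k - m div 2 then (1::complex) else 0))
      = (if m div 2 \<le> i + m div 2 \<and> i = i + m div 2 - m div 2 then 1 else 0)
      * (if m div 2 \<le> i + m div 2 \<and> j = i + m div 2 - m div 2 then 1 else 0)"
      by (intro sum_single) auto
    thus ?thesis using True by auto
  next
    case False
    have "(\<Sum>k = 0..<m. (if m div 2 \<le> k \<and> i = k - m div 2 then 1 else 0)
      * (if m div 2 \<le> k \<and> j = k - m div 2 then (1::complex) else 0)) = 0"
    proof (intro sum.neutral ballI)
      fix k assume k: "k \<in> {0..<m}"
      have "\<not> (m div 2 \<le> k \<and> i = k - m div 2)" using False k i m by auto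
      thus "(if m div 2 \<le> k \<and> i = k - m div 2 then 1 else 0)
        * (if m div 2 \<le> k \<and> j = k - m div 2 then (1::complex) else 0) = 0" by simp
    qed
    thus ?thesis using False by simp
  qed
  finally show "(mat_adjoint (vm m) * vm m) $$ (i,j) = pm m $$ (i,j)" using i j unfolding pm_def by simp
qed (auto simp: pm_def vm_def)

lemma vvs: assumes m: "even m" shows "vm m * mat_adjoint (vm m) = qm m"
proof (rule eq_matI)
  fix i j assume "i < dim_row (qm m)" "j < dim_col (qm m)"
  hence i: "i < m" and j: "j < m" by (auto simp: pm_def qm_def)
  have "(vm m * mat_adjoint (vm m)) $$ (i,j) = (\<Sum>k = 0..<m. (if m div 2 \<le> i \<and> k = i - m div 2 then 1 else 0)
      * (if m div 2 \<le> j \<and> k = j - m div 2 then 1 else 0))"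
    using i j by (simp add: scalar_prod_def vsm_index vm_def)
  also have "\<dots> = (if i = j \<and> m div 2 \<le> i then 1 else 0)"
  proof (cases "m div 2 \<le> i")
    case True
    have "i - m div 2 < m" using i by auto
    hence "(\<Sum>k = 0..<m. (if m div 2 \<le> i \<and> k = i - m div 2 then 1 else 0)
      * (if m div 2 \<le> j \<and> k = j - m div 2 then (1::complex) else 0))
      = (if m div 2 \<le> i \<and> i - m div 2 = i - m div 2 then 1 else 0)
      * (if m div 2 \<le> j \<and> i - m div 2 = j - m div 2 then 1 else 0)"
      by (intro sum_single) auto
    thus ?thesis using True by auto
  next
    case False
    have "(\<Sum>k = 0..<m. (if m div 2 \<le> i \<and> k = i - m div 2 then 1 else 0)
      * (if m div 2 \<le> j \<and> k = j - m div 2 then (1::complex) else 0)) = 0"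
      using False by (intro sum.neutral ballI) simp
    thus ?thesis using False by simp
  qed
  finally show "(vm m * mat_adjoint (vm m)) $$ (i,j) = qm m $$ (i,j)" using i j unfolding qm_def by simp
qed (auto simp: qm_def vm_def)

lemma pp: "pm m * pm m = pm m"
proof (rule eq_matI)
  fix i j assume "i < dim_row (pm m)" "j < dim_col (pm m)"
  hence i: "i < m" and j: "j < m" by (auto simp: pm_def qm_def)
  have "(pm m * pm m) $$ (i,j) = (\<Sum>k = 0..<m. (if i = k \<and> i < m div 2 then 1 else 0)
      * (if k = j \<and> k < m div 2 then 1 else 0))"
    using i j by (simp add: scalar_prod_def pm_def)
  also have "\<dots> = (if i = i \<and> i < m div 2 then 1 else 0) * (if i = j \<and> i < m div 2 then (1::complex) else 0)"
    using i by (intro sum_single) auto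
  finally show "(pm m * pm m) $$ (i,j) = pm m $$ (i,j)" using i j unfolding pm_def by simp
qed (auto simp: pm_def vm_def)

lemma pq1: "1 \<cdot>\<^sub>m pm m + 1 \<cdot>\<^sub>m qm m - 1\<^sub>m m = 0\<^sub>m m m"
  by (intro eq_matI) (auto simp: pm_def qm_def)


lemma dw_inst:
  assumes "duplicator_wins \<epsilon> p" "i < length p" "j < length p" "k < length p" "cmod y \<le> 1" "cmod z \<le> 1"
  shows "\<bar>op_norm (fst (p!i)) - op_norm (snd (p!i))\<bar> \<le> \<epsilon>"
    and "\<bar>op_norm (fst (p!i) * fst (p!j) - fst (p!k)) - op_norm (snd (p!i) * snd (p!j) - snd (p!k))\<bar> \<le> \<epsilon>"
    and "\<bar>op_norm (y \<cdot>\<^sub>m fst (p!i) + z \<cdot>\<^sub>m fst (p!j) - fst (p!k))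
        - op_norm (y \<cdot>\<^sub>m snd (p!i) + z \<cdot>\<^sub>m snd (p!j) - snd (p!k))\<bar> \<le> \<epsilon>"
    and "\<bar>op_norm (mat_adjoint (fst (p!i)) - fst (p!j)) - op_norm (mat_adjoint (snd (p!i)) - snd (p!j))\<bar> \<le> \<epsilon>"
  using assms unfolding duplicator_wins_def Let_def by auto

lemma self_minus: "A \<in> carrier_mat n n \<Longrightarrow> A - A = (0\<^sub>m n n :: complex mat)"
  by (intro eq_matI) auto

lemma from_zero: assumes "\<bar>a - op_norm (0\<^sub>m m m :: complex mat)\<bar> \<le> \<epsilon>" "0 < m" shows "a \<le> \<epsilon>"
  using assms op_norm_zero[OF assms(2)] by simp

theorem theorem4:
  shows "\<exists>\<epsilon>0>0. \<forall>\<epsilon> m l. 0 < \<epsilon> \<and> \<epsilon> < \<epsilon>0 \<and> even m \<and> m \<ge> 2 \<and> odd l \<and> l \<ge> 1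
           \<longrightarrow> challenger_wins_game l m 6 \<epsilon>"
proof (intro exI[of _ "1/28"] conjI allI impI)
  show "(0::real) < 1/28" by simp
  fix \<epsilon> :: real and m l :: nat
  assume H: "0 < \<epsilon> \<and> \<epsilon> < 1/28 \<and> even m \<and> m \<ge> 2 \<and> odd l \<and> l \<ge> 1"
  hence eps: "\<epsilon> < 1/28" and m: "even m" "0 < m" and l: "odd l" "0 < l" by auto
  define \<sigma> :: strategy where "\<sigma> h = (if length h = 0 then (True, 1\<^sub>m l) else (False,
      if length h = 1 then 1\<^sub>m m else if length h = 2 then pm m else if length h = 3 then vm m
      else if length h = 4 then mat_adjoint (vm m) else qm m))" for h
  have legal: "legal_challenger_strategy l m \<sigma>"
    unfolding legal_challenger_strategy_def \<sigma>_def
    using one_ub[OF l(2)] one_ub[OF m(2)] pm_ub[OF m(2)] qm_ub[OF m(2)] vm_ub[OF m(2)] vsm_ub[OF m] by auto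
  have "\<forall>p. consistent_play l m 6 \<sigma> p \<longrightarrow> \<not> duplicator_wins \<epsilon> p"
  proof (intro allI impI notI)
    fix p assume cp: "consistent_play l m 6 \<sigma> p" and dw: "duplicator_wins \<epsilon> p"
    have len: "length p = 6" using cp unfolding consistent_play_def by simp
    have C: "\<And>j. j < 6 \<Longrightarrow> (let (side, x) = \<sigma> (take j p) in
        (if side then fst (p!j) = x \<and> snd (p!j) \<in> unit_ball m
                 else snd (p!j) = x \<and> fst (p!j) \<in> unit_ball l))"
      using cp unfolding consistent_play_def by blast
    have c0: "fst (p!0) = 1\<^sub>m l" "snd (p!0) \<in> unit_ball m" using C[of 0] len by (auto simp: \<sigma>_def)
    have c1: "snd (p!1) = 1\<^sub>m m" "fst (p!1) \<in> unit_ball l" using C[of 1] len by (auto simp: \<sigma>_def)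
    have c2: "snd (p!2) = pm m" "fst (p!2) \<in> unit_ball l" using C[of 2] len by (auto simp: \<sigma>_def)
    have c3: "snd (p!3) = vm m" "fst (p!3) \<in> unit_ball l" using C[of 3] len by (auto simp: \<sigma>_def)
    have c4: "snd (p!4) = mat_adjoint (vm m)" "fst (p!4) \<in> unit_ball l" using C[of 4] len by (auto simp: \<sigma>_def)
    have c5: "snd (p!5) = qm m" "fst (p!5) \<in> unit_ball l" using C[of 5] len by (auto simp: \<sigma>_def)
    define e where "e = snd (p!0)"
    define f where "f = fst (p!1)"
    define P where "P = fst (p!2)"
    define u where "u = fst (p!3)"
    define w where "w = fst (p!4)"
    define R where "R = fst (p!5)"
    have ec: "e \<in> carrier_mat m m" using c0 unfolding e_def unit_ball_def by auto
    have car: "f \<in> carrier_mat l l" "P \<in> carrier_mat l l" "u \<in> carrier_mat l l"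
      "w \<in> carrier_mat l l" "R \<in> carrier_mat l l"
      using c1 c2 c3 c4 c5 unfolding f_def P_def u_def w_def R_def unit_ball_def by auto
    have uB: "op_norm u \<le> 1" and PB: "op_norm P \<le> 1"
      using c2 c3 unfolding P_def u_def unit_ball_def by auto
    have h1: "op_norm (f * 1\<^sub>m l - 1\<^sub>m l) \<le> \<epsilon>"
    proof -
      have "\<bar>op_norm (fst (p!1) * fst (p!0) - fst (p!0)) - op_norm (snd (p!1) * snd (p!0) - snd (p!0))\<bar> \<le> \<epsilon>"
        by (rule dw_inst(2)[OF dw, of 1 0 0 0 0]) (use len in auto)
      hence "\<bar>op_norm (f * 1\<^sub>m l - 1\<^sub>m l) - op_norm (1\<^sub>m m * e - e)\<bar> \<le> \<epsilon>"
        using c0 c1 unfolding f_def e_def by simp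
      moreover have "1\<^sub>m m * e - e = 0\<^sub>m m m" using ec self_minus[OF ec] by simp
      ultimately have "\<bar>op_norm (f * 1\<^sub>m l - 1\<^sub>m l) - op_norm (0\<^sub>m m m :: complex mat)\<bar> \<le> \<epsilon>" by simp
      thus ?thesis by (rule from_zero[OF _ m(2)])
    qed
    have h2: "op_norm (1 \<cdot>\<^sub>m P + 1 \<cdot>\<^sub>m R - f) \<le> \<epsilon>"
    proof -
      have "\<bar>op_norm (1 \<cdot>\<^sub>m fst (p!2) + 1 \<cdot>\<^sub>m fst (p!5) - fst (p!1))
        - op_norm (1 \<cdot>\<^sub>m snd (p!2) + 1 \<cdot>\<^sub>m snd (p!5) - snd (p!1))\<bar> \<le> \<epsilon>"
        by (rule dw_inst(3)[OF dw]) (use len in auto)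
      hence "\<bar>op_norm (1 \<cdot>\<^sub>m P + 1 \<cdot>\<^sub>m R - f) - op_norm (0\<^sub>m m m :: complex mat)\<bar> \<le> \<epsilon>"
        using c1 c2 c5 pq1[of m] unfolding f_def P_def R_def by simp
      thus ?thesis by (rule from_zero[OF _ m(2)])
    qed
    have h3: "op_norm (w * u - P) \<le> \<epsilon>"
    proof -
      have "\<bar>op_norm (fst (p!4) * fst (p!3) - fst (p!2)) - op_norm (snd (p!4) * snd (p!3) - snd (p!2))\<bar> \<le> \<epsilon>"
        by (rule dw_inst(2)[OF dw, of 4 3 2 0 0]) (use len in auto)
      hence "\<bar>op_norm (w * u - P) - op_norm (pm m - pm m)\<bar> \<le> \<epsilon>"
        using c2 c3 c4 vsv[OF m(1)] unfolding w_def u_def P_def by simp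
      hence "\<bar>op_norm (w * u - P) - op_norm (0\<^sub>m m m :: complex mat)\<bar> \<le> \<epsilon>" using self_minus[OF pm_c[of m]] by simp
      thus ?thesis by (rule from_zero[OF _ m(2)])
    qed
    have h4: "op_norm (u * w - R) \<le> \<epsilon>"
    proof -
      have "\<bar>op_norm (fst (p!3) * fst (p!4) - fst (p!5)) - op_norm (snd (p!3) * snd (p!4) - snd (p!5))\<bar> \<le> \<epsilon>"
        by (rule dw_inst(2)[OF dw, of 3 4 5 0 0]) (use len in auto)
      hence "\<bar>op_norm (u * w - R) - op_norm (qm m - qm m)\<bar> \<le> \<epsilon>"
        using c3 c4 c5 vvs[OF m(1)] unfolding w_def u_def R_def by simp
      hence "\<bar>op_norm (u * w - R) - op_norm (0\<^sub>m m m :: complex mat)\<bar> \<le> \<epsilon>" using self_minus[OF qm_c[of m]] by simp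
      thus ?thesis by (rule from_zero[OF _ m(2)])
    qed
    have h5: "op_norm (mat_adjoint u - w) \<le> \<epsilon>"
    proof -
      have "\<bar>op_norm (mat_adjoint (fst (p!3)) - fst (p!4)) - op_norm (mat_adjoint (snd (p!3)) - snd (p!4))\<bar> \<le> \<epsilon>"
        by (rule dw_inst(4)[OF dw, of 3 4 0 0 0]) (use len in auto)
      hence "\<bar>op_norm (mat_adjoint u - w) - op_norm (mat_adjoint (vm m) - mat_adjoint (vm m))\<bar> \<le> \<epsilon>"
        using c3 c4 unfolding w_def u_def by simp
      hence "\<bar>op_norm (mat_adjoint u - w) - op_norm (0\<^sub>m m m :: complex mat)\<bar> \<le> \<epsilon>"
        using self_minus[of "mat_adjoint (vm m)" m] by simp
      thus ?thesis by (rule from_zero[OF _ m(2)])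
    qed
    have h6: "op_norm (P * P - P) \<le> \<epsilon>"
    proof -
      have "\<bar>op_norm (fst (p!2) * fst (p!2) - fst (p!2)) - op_norm (snd (p!2) * snd (p!2) - snd (p!2))\<bar> \<le> \<epsilon>"
        by (rule dw_inst(2)[OF dw, of 2 2 2 0 0]) (use len in auto)
      hence "\<bar>op_norm (P * P - P) - op_norm (pm m - pm m)\<bar> \<le> \<epsilon>"
        using c2 pp[of m] unfolding P_def by simp
      hence "\<bar>op_norm (P * P - P) - op_norm (0\<^sub>m m m :: complex mat)\<bar> \<le> \<epsilon>" using self_minus[OF pm_c[of m]] by simp
      thus ?thesis by (rule from_zero[OF _ m(2)])
    qed
    show False by (rule main_l[OF car uB PB h1 h2 h3 h4 h5 h6 eps l(1)])
  qed
  thus "challenger_wins_game l m 6 \<epsilon>" unfolding challenger_wins_game_def using legal by blast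
qed

end
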